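(* Let $K\ge2$, $0<q<p$ with $p+(K-1)q=1$, $\phi\in\Delta$ with $\phi_1\le\cdots\le\phi_K$, and $n\in\{0,\dots,K-1\}$. Let $g(n)=(1-nq)\phi_{n+1}-q\sum_{i>n}\phi_i$. Then: (a) $\theta^{[n]}\in\Delta$ if and only if $g(n)\ge0$; (b) for $n>0$, if $\theta^{[n-1]}\in\Delta$ then $\theta^{[n]}\in\Delta$; (c) for $n>0$, if $\theta^{[n-1]}\in\Delta$ then $\lambda^{[n-1]}\ge\lambda^{[n]}$; (d) for $n>0$, if $\phi_{n+1}=\phi_n$ then $g(n)=g(n-1)$; (e) for $n>0$, if $g(n-1)=0$ then $\theta^{[n-1]}=\theta^{[n]}$.
   Context: $\Delta=\{\theta\in\mathbb{R}^K:\theta_i\ge0,\sum_i\theta_i=1\}$. For sorted $\phi$ and $n\in\{0,\dots,K-1\}$: $\lambda^{[n]}=\frac{(p-q)\sum_{i>n}\phi_i}{1-nq}$, and $\theta^{[n]}\in\mathbb{R}^K$ is given by $\theta^{[n]}_i=0$ for $i\le n$ and $\theta^{[n]}_i=\frac{\phi_i}{\lambda^{[n]}}-\frac{q}{p-q}$ for $i>n$ (its entries sum to 1 but may be negative). *)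

theory Defs
  imports Complex_Main
begin

text \<open>Vectors in R^K are represented as functions nat => real, indexed by 1..K
  (values outside 1..K are irrelevant).\<close>

definition simplex :: "nat \<Rightarrow> (nat \<Rightarrow> real) \<Rightarrow> bool" where
  "simplex K \<theta> \<longleftrightarrow> (\<forall>i\<in>{1..K}. \<theta> i \<ge> 0) \<and> (\<Sum>i=1..K. \<theta> i) = 1"

definition lam :: "real \<Rightarrow> real \<Rightarrow> nat \<Rightarrow> (nat \<Rightarrow> real) \<Rightarrow> nat \<Rightarrow> real" where
  "lam p q K \<phi> n = (p - q) * (\<Sum>i=n+1..K. \<phi> i) / (1 - real n * q)"

definition theta :: "real \<Rightarrow> real \<Rightarrow> nat \<Rightarrow> (nat \<Rightarrow> real) \<Rightarrow> nat \<Rightarrow> nat \<Rightarrow> real" where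
  "theta p q K \<phi> n i = (if i \<le> n then 0 else \<phi> i / lam p q K \<phi> n - q / (p - q))"

definition gfun :: "real \<Rightarrow> nat \<Rightarrow> (nat \<Rightarrow> real) \<Rightarrow> nat \<Rightarrow> real" where
  "gfun q K \<phi> n = (1 - real n * q) * \<phi> (n + 1) - q * (\<Sum>i=n+1..K. \<phi> i)"

end

theory Submission
  imports Defs
begin

lemma aux:
  fixes K m :: nat and p q :: real and \<phi> :: "nat \<Rightarrow> real"
  assumes K2: "K \<ge> 2" and q0: "0 < q" and qp: "q < p" and pK: "p + real (K - 1) * q = 1"
    and sx: "simplex K \<phi>"
    and mono: "\<forall>i j. 1 \<le> i \<longrightarrow> i \<le> j \<longrightarrow> j \<le> K \<longrightarrow> \<phi> i \<le> \<phi> j"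
    and mK: "m < K"
  shows "(\<Sum>i=m+1..K. \<phi> i) > 0" "1 - real m * q > 0" "lam p q K \<phi> m > 0"
    "(\<Sum>i=1..K. theta p q K \<phi> m i) = 1"
    "simplex K (theta p q K \<phi> m) \<longleftrightarrow> gfun q K \<phi> m \<ge> 0"
proof -
  define S where "S = (\<Sum>i=m+1..K. \<phi> i)"
  have nn: "\<And>i. i \<in> {1..K} \<Longrightarrow> \<phi> i \<ge> 0" using sx unfolding simplex_def by auto
  have s1: "(\<Sum>i=1..K. \<phi> i) = 1" using sx unfolding simplex_def by auto
  have "(\<Sum>i=1..K. \<phi> i) \<le> (\<Sum>i=1..K. \<phi> K)"
    by (rule sum_mono) (use mono in auto)
  hence "1 \<le> real K * \<phi> K" using s1 by simp
  hence phK: "\<phi> K > 0" using K2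
    by (smt (verit) mult_nonneg_nonpos of_nat_0_le_iff)
  have "\<phi> K \<le> S" unfolding S_def
    by (rule member_le_sum) (use mK nn in auto)
  thus Spos: "(\<Sum>i=m+1..K. \<phi> i) > 0" using phK S_def by simp
  have "real m \<le> real K - 1" using mK by linarith
  hence "real m * q \<le> (real K - 1) * q" using q0 by (simp add: mult_right_mono)
  moreover have "real (K - 1) = real K - 1" using K2 by simp
  ultimately show mq: "1 - real m * q > 0" using pK qp q0 by (smt (verit))
  show lp: "lam p q K \<phi> m > 0" unfolding lam_def using Spos mq qp by simp
  have pq: "p - q = 1 - real K * q" using pK K2 by (simp add: algebra_simps)
  have "(\<Sum>i=1..K. theta p q K \<phi> m i) = (\<Sum>i=m+1..K. theta p q K \<phi> m i)"
    by (rule sum.mono_neutral_right) (auto simp: theta_def)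
  also have "\<dots> = (\<Sum>i=m+1..K. \<phi> i / lam p q K \<phi> m - q / (p - q))"
    by (rule sum.cong) (auto simp: theta_def)
  also have "\<dots> = S / lam p q K \<phi> m - real (K - m) * (q / (p - q))"
    by (simp add: sum_subtractf sum_divide_distrib S_def)
  also have "\<dots> = (1 - real m * q) / (p - q) - (real K - real m) * q / (p - q)"
    using Spos mq qp mK unfolding lam_def S_def by (simp add: of_nat_diff)
  also have "\<dots> = 1" using pq qp by (simp add: field_simps)
  finally show sum1: "(\<Sum>i=1..K. theta p q K \<phi> m i) = 1" .
  have key: "theta p q K \<phi> m i \<ge> 0 \<longleftrightarrow> q * S \<le> (1 - real m * q) * \<phi> i" if "i > m" for i
  proof -
    have "theta p q K \<phi> m i = \<phi> i * (1 - real m * q) / ((p - q) * S) - q / (p - q)"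
      using that unfolding theta_def lam_def S_def by simp
    also have "\<dots> = ((1 - real m * q) * \<phi> i - q * S) / ((p - q) * S)"
    proof -
      have "S \<noteq> 0" "p - q \<noteq> 0" using qp Spos S_def by auto
      thus ?thesis by (simp add: diff_divide_distrib mult.commute)
    qed
    moreover have "\<not> (p - q) * S \<le> 0" using qp Spos S_def
      by (simp add: not_le)
    ultimately show ?thesis using qp Spos S_def
      by (simp add: zero_le_divide_iff)
  qed
  show "simplex K (theta p q K \<phi> m) \<longleftrightarrow> gfun q K \<phi> m \<ge> 0"
  proof
    assume "simplex K (theta p q K \<phi> m)"
    hence "theta p q K \<phi> m (m+1) \<ge> 0" unfolding simplex_def using mK by auto
    thus "gfun q K \<phi> m \<ge> 0" using key[of "m+1"] unfolding gfun_def S_def by simp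
  next
    assume g: "gfun q K \<phi> m \<ge> 0"
    have "theta p q K \<phi> m i \<ge> 0" if "i \<in> {1..K}" for i
    proof (cases "i \<le> m")
      case True thus ?thesis by (simp add: theta_def)
    next
      case False
      have "\<phi> (m+1) \<le> \<phi> i" using mono False that by auto
      hence "(1 - real m * q) * \<phi> (m+1) \<le> (1 - real m * q) * \<phi> i" using mq
        by (simp add: mult_left_mono)
      thus ?thesis using key[of i] False g unfolding gfun_def S_def by simp
    qed
    thus "simplex K (theta p q K \<phi> m)" unfolding simplex_def using sum1 by auto
  qed
qed

theorem lemma3:
  fixes K n :: nat and p q :: real and \<phi> :: "nat \<Rightarrow> real"
  assumes "K \<ge> 2" and "0 < q" and "q < p" and "p + real (K - 1) * q = 1"
    and "simplex K \<phi>"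
    and "\<forall>i j. 1 \<le> i \<longrightarrow> i \<le> j \<longrightarrow> j \<le> K \<longrightarrow> \<phi> i \<le> \<phi> j"
    and "n < K"
  shows "(simplex K (theta p q K \<phi> n) \<longleftrightarrow> gfun q K \<phi> n \<ge> 0)
    \<and> (n > 0 \<longrightarrow> simplex K (theta p q K \<phi> (n - 1)) \<longrightarrow> simplex K (theta p q K \<phi> n))
    \<and> (n > 0 \<longrightarrow> simplex K (theta p q K \<phi> (n - 1)) \<longrightarrow> lam p q K \<phi> (n - 1) \<ge> lam p q K \<phi> n)
    \<and> (n > 0 \<longrightarrow> \<phi> (n + 1) = \<phi> n \<longrightarrow> gfun q K \<phi> n = gfun q K \<phi> (n - 1))
    \<and> (n > 0 \<longrightarrow> gfun q K \<phi> (n - 1) = 0 \<longrightarrow>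
         (\<forall>i\<in>{1..K}. theta p q K \<phi> (n - 1) i = theta p q K \<phi> n i))"
proof -
  note A = aux[OF assms(1-6) assms(7)]
  have B: "n > 0 \<Longrightarrow> P" if "n > 0 \<Longrightarrow> P" for P using that by simp
  show ?thesis
  proof (cases "n = 0")
    case True thus ?thesis using A(5) by simp
  next
    case False
    hence n0: "n > 0" by simp
    note A' = aux[OF assms(1-6), of "n-1"]
    define S where "S = (\<Sum>i=n+1..K. \<phi> i)"
    have split: "(\<Sum>i=n-1+1..K. \<phi> i) = \<phi> n + S"
      using n0 assms(7) unfolding S_def by (simp add: sum.atLeast_Suc_atMost)
    have g1: "gfun q K \<phi> (n-1) = (1 - real n * q) * \<phi> n - q * S"
      unfolding gfun_def using n0 split by (simp add: of_nat_diff algebra_simps)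
    have g0: "gfun q K \<phi> n = (1 - real n * q) * \<phi> (n+1) - q * S"
      unfolding gfun_def S_def by simp
    have Sp: "S > 0" using A(1) S_def by simp
    have mq: "1 - real n * q > 0" by (rule A(2))
    have mq1: "1 - real (n-1) * q > 0" using A'(2) assms(7) by simp
    have mq1': "1 - (real n - 1) * q > 0" using mq1 n0 by (simp add: of_nat_diff)
    have l1: "lam p q K \<phi> (n-1) = (p - q) * (\<phi> n + S) / (1 - (real n - 1) * q)"
      unfolding lam_def using split n0 by (simp add: of_nat_diff)
    have l0: "lam p q K \<phi> n = (p - q) * S / (1 - real n * q)"
      unfolding lam_def S_def by simp
    have "\<phi> n \<le> \<phi> (n+1)" using assms(6) n0 assms(7) by simp
    hence gmono: "gfun q K \<phi> (n-1) \<le> gfun q K \<phi> n" using g0 g1 mq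
      by (simp add: mult_left_mono)
    show ?thesis
    proof (intro conjI impI ballI)
      show "simplex K (theta p q K \<phi> n) = (0 \<le> gfun q K \<phi> n)" by (rule A(5))
    next
      assume "simplex K (theta p q K \<phi> (n - 1))"
      hence gp: "gfun q K \<phi> (n-1) \<ge> 0" using A'(5) assms(7) by simp
      thus "simplex K (theta p q K \<phi> n)" using A(5) gmono by simp
    next
      assume "simplex K (theta p q K \<phi> (n - 1))"
      hence gp: "gfun q K \<phi> (n-1) \<ge> 0" using A'(5) assms(7) by simp
      have "S * (1 - (real n - 1) * q) \<le> (\<phi> n + S) * (1 - real n * q)"
        using gp g1 by (simp add: algebra_simps)
      hence "(p - q) * (S * (1 - (real n - 1) * q)) \<le> (p - q) * ((\<phi> n + S) * (1 - real n * q))"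
        using assms(3) by (simp add: mult_left_mono)
      hence "(p - q) * S / (1 - real n * q) \<le> (p - q) * (\<phi> n + S) / (1 - (real n - 1) * q)"
        using mq mq1' by (simp add: divide_simps mult_ac)
      thus "lam p q K \<phi> n \<le> lam p q K \<phi> (n-1)" using l0 l1 by simp
    next
      assume "\<phi> (n + 1) = \<phi> n"
      thus "gfun q K \<phi> n = gfun q K \<phi> (n - 1)" using g0 g1 by simp
    next
      assume "gfun q K \<phi> (n - 1) = 0"
      hence e: "\<phi> n * (1 - real n * q) = q * S" using g1 by (simp add: algebra_simps)
      have "(\<phi> n + S) * (1 - real n * q) = S * (1 - (real n - 1) * q)"
        using e by (simp add: algebra_simps)
      hence "\<phi> n + S = S * (1 - (real n - 1) * q) / (1 - real n * q)"
        using mq by (simp add: eq_divide_eq)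
      hence leq: "lam p q K \<phi> (n-1) = lam p q K \<phi> n" using l0 l1 mq mq1'
        by simp
      have "\<phi> n / lam p q K \<phi> n = \<phi> n * (1 - real n * q) / ((p - q) * S)"
        using l0 by simp
      also have "\<dots> = q / (p - q)" using e Sp by simp
      finally have tn: "\<phi> n / lam p q K \<phi> n = q / (p - q)" .
      fix i assume "i \<in> {1..K}"
      show "theta p q K \<phi> (n - 1) i = theta p q K \<phi> n i"
      proof -
        consider "i \<le> n - 1" | "i = n" | "i > n" by linarith
        thus ?thesis
        proof cases
          case 1 hence "i \<le> n" by simp
          thus ?thesis using 1 by (simp add: theta_def)
        next
          case 2 thus ?thesis using n0 leq tn by (simp add: theta_def)
        next
          case 3 hence "\<not> i \<le> n - 1" "\<not> i \<le> n" by auto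
          thus ?thesis using leq by (simp add: theta_def)
        qed
      qed
    qed
  qed
qed

end
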